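(* For any time warp $f$, any $n\in\omega\setminus\{0\}$ and any $m\in\omega$: (i) $f^\star(n)=m$ iff $f(m)<n\le f(m+1)$; (ii) $f^\star(\omega)=m$ iff $f(m)<\omega=f(m+1)$; (iii) $f^\star(n)=\omega$ iff $f(\omega)<n$; (iv) $f^\star(\omega)=\omega$ iff $f(\omega)<\omega$ or $\mathrm{last}(f)=\omega$.
   Context: Let $\omega^+=\omega\cup\{\omega\}$. A time warp is a join-preserving map $f\colon\omega^+\to\omega^+$ (equivalently order-preserving with $f(0)=0$, $f(\omega)=\bigvee_{n\in\omega}f(n)$), with time warps ordered pointwise. $p(m)=\bigvee\{k\in\omega\mid k<m\}$ is the predecessor time warp, and $f^\star$ is the largest time warp $h$ with $f\circ h\le p$. For a time warp $f$, $\mathrm{last}(f)=\min\{m\in\omega^+\mid f(m)=f(\omega)\}$. *)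

theory Defs
  imports "HOL-Library.Extended_Nat"
begin

text \<open>omega^+ is modelled by enat; omega is \<infinity>.\<close>

definition time_warp :: "(enat \<Rightarrow> enat) \<Rightarrow> bool" where
  "time_warp f \<longleftrightarrow> (\<forall>A. f (Sup A) = Sup (f ` A))"

definition pred_tw :: "enat \<Rightarrow> enat" where
  "pred_tw m = Sup {enat k | k. enat k < m}"

definition star :: "(enat \<Rightarrow> enat) \<Rightarrow> (enat \<Rightarrow> enat)" where
  "star f = (GREATEST h. time_warp h \<and> f \<circ> h \<le> pred_tw)"

definition last_tw :: "(enat \<Rightarrow> enat) \<Rightarrow> enat" where
  "last_tw f = (LEAST m. f m = f \<infinity>)"

end

theory Submission
  imports Defs
begin

lemma Sup_range_enat: "Sup (range enat) = \<infinity>"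
proof -
  have "\<not> finite (range enat)" using finite_imageD[of enat UNIV] by (auto simp: inj_on_def)
  then show ?thesis by (simp add: Sup_enat_def)
qed

lemma tw_mono: assumes "time_warp f" shows "mono f"
proof (rule monoI)
  fix a b :: enat assume ab: "a \<le> b"
  have "f (Sup {a,b}) = Sup (f ` {a, b})" using assms unfolding time_warp_def by blast
  then have "f (Sup {a,b}) = Sup {f a, f b}" by simp
  moreover have "Sup {a,b} = b" using ab by (simp add: sup_absorb2)
  ultimately show "f a \<le> f b" by (metis Sup_insert sup.cobounded1 ccpo_Sup_singleton)
qed

lemma tw_zero: assumes "time_warp f" shows "f 0 = 0"
  using assms unfolding time_warp_def by (metis Sup_empty bot_enat_def image_empty)

lemma tw_inf: assumes "time_warp f" shows "f \<infinity> = Sup (range (\<lambda>k. f (enat k)))"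
  using assms unfolding time_warp_def by (metis Sup_range_enat image_image)

lemma tw_intro:
  assumes m: "mono h" and z: "h 0 = 0" and i: "h \<infinity> = Sup (range (\<lambda>k. h (enat k)))"
  shows "time_warp h"
  unfolding time_warp_def
proof
  fix A :: "enat set"
  show "h (Sup A) = Sup (h ` A)"
  proof (cases "A = {}")
    case True then show ?thesis using z by (simp add: bot_enat_def)
  next
    case ne: False
    show ?thesis
    proof (cases "Sup A \<in> A")
      case True
      have "Sup (h ` A) \<le> h (Sup A)" by (rule Sup_least) (auto intro: monoD[OF m] Sup_upper)
      moreover have "h (Sup A) \<le> Sup (h ` A)" using True by (auto intro: Sup_upper)
      ultimately show ?thesis by simp
    next
      case False
      then have inf: "\<not> finite A" using ne by (auto simp: Sup_enat_def dest: Max_in)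
      then have S: "Sup A = \<infinity>" using ne by (simp add: Sup_enat_def)
      have "\<infinity> \<notin> A" using False S by simp
      have "Sup (h ` A) \<le> Sup (range (\<lambda>k. h (enat k)))"
      proof (rule Sup_least)
        fix y assume "y \<in> h ` A"
        then obtain a where "a \<in> A" "y = h a" by auto
        with \<open>\<infinity> \<notin> A\<close> obtain k where "a = enat k" by (cases a) auto
        then show "y \<le> Sup (range (\<lambda>k. h (enat k)))" using \<open>y = h a\<close> by (auto intro: Sup_upper)
      qed
      moreover have "Sup (range (\<lambda>k. h (enat k))) \<le> Sup (h ` A)"
      proof (rule Sup_least)
        fix y assume "y \<in> range (\<lambda>k. h (enat k))"
        then obtain k where k: "y = h (enat k)" by auto
        have "\<exists>a\<in>A. \<not> a \<le> enat k" using inf finite_enat_bounded by blast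
        then obtain a where "a \<in> A" "enat k \<le> a" by auto
        then have "y \<le> h a" using k monoD[OF m] by auto
        also have "\<dots> \<le> Sup (h ` A)" using \<open>a \<in> A\<close> by (auto intro: Sup_upper)
        finally show "y \<le> Sup (h ` A)" .
      qed
      ultimately show ?thesis using S i by simp
    qed
  qed
qed

lemma pred_Suc: "pred_tw (enat (Suc k)) = enat k"
proof -
  have "{enat j | j. enat j < enat (Suc k)} = enat ` {..k}" by auto
  moreover have "Sup (enat ` {..k}) = enat k"
    by (rule antisym) (auto intro: Sup_least Sup_upper)
  ultimately show ?thesis by (simp add: pred_tw_def)
qed

lemma pred_zero: "pred_tw 0 = 0"
  by (simp add: pred_tw_def zero_enat_def bot_enat_def)

lemma pred_inf: "pred_tw \<infinity> = \<infinity>"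
proof -
  have "{enat j | j. enat j < \<infinity>} = range enat" by auto
  then show ?thesis by (simp add: pred_tw_def Sup_range_enat)
qed

lemma pred_mono: "mono pred_tw"
  unfolding pred_tw_def mono_def by (auto intro!: Sup_subset_mono)

definition gg :: "(enat \<Rightarrow> enat) \<Rightarrow> enat \<Rightarrow> enat" where
  "gg f x = Sup {y. f y \<le> pred_tw x}"

lemma gg_iff: assumes "time_warp f" shows "y \<le> gg f x \<longleftrightarrow> f y \<le> pred_tw x"
proof
  have "f (gg f x) = Sup (f ` {y. f y \<le> pred_tw x})"
    using assms unfolding time_warp_def gg_def by auto
  also have "\<dots> \<le> pred_tw x" by (auto intro: Sup_least)
  finally have *: "f (gg f x) \<le> pred_tw x" .
  assume "y \<le> gg f x"
  then show "f y \<le> pred_tw x" using monoD[OF tw_mono[OF assms]] * order_trans by blast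
next
  assume "f y \<le> pred_tw x" then show "y \<le> gg f x" unfolding gg_def by (auto intro: Sup_upper)
qed

definition hh :: "(enat \<Rightarrow> enat) \<Rightarrow> enat \<Rightarrow> enat" where
  "hh f x = (case x of enat k \<Rightarrow> if k = 0 then 0 else gg f (enat k)
     | \<infinity> \<Rightarrow> Sup (range (\<lambda>k. gg f (enat k))))"


lemma gg_mono: "mono (gg f)"
proof (rule monoI)
  fix x y :: enat assume "x \<le> y"
  then have "pred_tw x \<le> pred_tw y" by (rule monoD[OF pred_mono])
  then have "{z. f z \<le> pred_tw x} \<subseteq> {z. f z \<le> pred_tw y}" by auto
  then show "gg f x \<le> gg f y" unfolding gg_def by (rule Sup_subset_mono)
qed

lemma hh_0: "hh f 0 = 0" by (simp add: hh_def zero_enat_def)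
lemma hh_pos: "k > 0 \<Longrightarrow> hh f (enat k) = gg f (enat k)" by (simp add: hh_def)
lemma hh_inf: "hh f \<infinity> = Sup (range (\<lambda>k. gg f (enat k)))" by (simp add: hh_def)

lemma hh_le_gg: "hh f x \<le> gg f x"
  by (cases x) (auto simp: hh_def zero_enat_def[symmetric] intro!: monoD[OF gg_mono] Sup_least)

lemma hh_mono: "mono (hh f)"
proof (rule monoI)
  fix x y :: enat assume xy: "x \<le> y"
  show "hh f x \<le> hh f y"
  proof (cases x)
    case (enat a)
    show ?thesis
    proof (cases "a = 0")
      case True then show ?thesis using enat hh_0 by (simp add: zero_enat_def[symmetric])
    next
      case False
      show ?thesis
      proof (cases y)
        case (enat b)
        then have "b > 0" using False \<open>x = enat a\<close> xy by auto
        then have "hh f y = gg f y" using enat hh_pos by simp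
        moreover have "hh f x = gg f x" using False \<open>x = enat a\<close> hh_pos by simp
        ultimately show ?thesis using monoD[OF gg_mono xy] by simp
      next
        case infinity
        then show ?thesis using hh_pos[of a f] False \<open>x = enat a\<close> hh_inf by (auto intro: Sup_upper)
      qed
    qed
  next
    case infinity then show ?thesis using xy by simp
  qed
qed

lemma hh_tw: "time_warp (hh f)"
proof (rule tw_intro[OF hh_mono hh_0])
  show "hh f \<infinity> = Sup (range (\<lambda>k. hh f (enat k)))"
  proof (rule antisym)
    show "hh f \<infinity> \<le> Sup (range (\<lambda>k. hh f (enat k)))"
      unfolding hh_inf
    proof (rule Sup_least)
      fix y assume "y \<in> range (\<lambda>k. gg f (enat k))"
      then obtain k where k: "y = gg f (enat k)" by auto
      have "y \<le> gg f (enat (Suc k))" using k monoD[OF gg_mono] by auto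
      also have "\<dots> = hh f (enat (Suc k))" using hh_pos by simp
      also have "\<dots> \<le> Sup (range (\<lambda>k. hh f (enat k)))" by (auto intro: Sup_upper)
      finally show "y \<le> Sup (range (\<lambda>k. hh f (enat k)))" .
    qed
  next
    show "Sup (range (\<lambda>k. hh f (enat k))) \<le> hh f \<infinity>"
      by (rule Sup_least) (auto intro: monoD[OF hh_mono])
  qed
qed

lemma hh_below: assumes "time_warp f" shows "f \<circ> hh f \<le> pred_tw"
proof (rule le_funI)
  fix x show "(f \<circ> hh f) x \<le> pred_tw x"
  proof (cases x)
    case (enat k)
    show ?thesis
    proof (cases "k = 0")
      case True then show ?thesis using enat hh_0 tw_zero[OF assms] pred_zero
        by (simp add: zero_enat_def[symmetric])
    next
      case False then show ?thesis using enat hh_pos[of k f] gg_iff[OF assms, of "gg f (enat k)" "enat k"] by simp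
    qed
  next
    case infinity then show ?thesis by (simp add: pred_inf)
  qed
qed

lemma hh_greatest: assumes "time_warp f" "time_warp h" "f \<circ> h \<le> pred_tw" shows "h \<le> hh f"
proof (rule le_funI)
  have g: "h x \<le> gg f x" for x using gg_iff[OF assms(1)] assms(3) by (auto simp: le_fun_def)
  fix x show "h x \<le> hh f x"
  proof (cases x)
    case (enat k)
    show ?thesis
    proof (cases "k = 0")
      case True then have "x = 0" using enat by (simp add: zero_enat_def)
      then show ?thesis using tw_zero[OF assms(2)] by simp
    next
      case False then show ?thesis using g[of x] hh_pos[of k f] enat by simp
    qed
  next
    case infinity
    have "h \<infinity> = Sup (range (\<lambda>k. h (enat k)))" by (rule tw_inf[OF assms(2)])
    also have "\<dots> \<le> Sup (range (\<lambda>k. gg f (enat k)))" using g by (auto intro!: Sup_mono)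
    finally show ?thesis using infinity hh_inf by simp
  qed
qed

lemma star_hh: assumes "time_warp f" shows "star f = hh f"
  unfolding star_def
  by (rule Greatest_equality) (auto simp: hh_tw hh_below[OF assms] hh_greatest[OF assms])

lemma enat_le_Sup_range: "enat j \<le> Sup (range F) \<longleftrightarrow> (\<exists>k. enat j \<le> F k)"
proof
  assume a: "enat j \<le> Sup (range F)"
  show "\<exists>k. enat j \<le> F k"
  proof (cases j)
    case 0 then show ?thesis by (simp add: zero_enat_def[symmetric])
  next
    case (Suc i)
    then have "enat i < Sup (range F)" using a less_le_trans[of "enat i" "enat j"] by simp
    then obtain k where "enat i < F k" by (auto simp: less_Sup_iff)
    then have "enat j \<le> F k" using Suc by (cases "F k") auto
    then show ?thesis by blast
  qed
next
  assume "\<exists>k. enat j \<le> F k" then show "enat j \<le> Sup (range F)" proof (elim exE)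
    fix k assume "enat j \<le> F k"
    moreover have "F k \<le> Sup (range F)" by (rule Sup_upper) simp
    ultimately show "enat j \<le> Sup (range F)" by (rule order_trans)
  qed
qed

lemma key_inf: assumes "time_warp f" shows "enat j \<le> hh f \<infinity> \<longleftrightarrow> f (enat j) < \<infinity>"
proof -
  have "enat j \<le> hh f \<infinity> \<longleftrightarrow> (\<exists>k. f (enat j) \<le> pred_tw (enat k))"
  proof -
    have "enat j \<le> hh f \<infinity> \<longleftrightarrow> (\<exists>k. enat j \<le> gg f (enat k))"
      unfolding hh_inf by (rule enat_le_Sup_range)
    also have "\<dots> \<longleftrightarrow> (\<exists>k. f (enat j) \<le> pred_tw (enat k))"
      using gg_iff[OF assms] by blast
    finally show ?thesis .
  qed
  also have "\<dots> \<longleftrightarrow> f (enat j) < \<infinity>"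
  proof
    assume "\<exists>k. f (enat j) \<le> pred_tw (enat k)"
    then obtain k where "f (enat j) \<le> pred_tw (enat k)" by auto
    moreover have "pred_tw (enat k) < \<infinity>"
    proof (cases k)
      case 0 then show ?thesis using pred_zero by (simp add: zero_enat_def)
    next
      case (Suc i) then show ?thesis by (simp add: pred_Suc)
    qed
    ultimately show "f (enat j) < \<infinity>" by (rule le_less_trans)
  next
    assume "f (enat j) < \<infinity>"
    then obtain i where "f (enat j) = enat i" by (cases "f (enat j)") auto
    then have "f (enat j) \<le> pred_tw (enat (Suc i))" by (simp add: pred_Suc)
    then show "\<exists>k. f (enat j) \<le> pred_tw (enat k)" by blast
  qed
  finally show ?thesis .
qed


lemma enat_eq_iff: "x = enat m \<longleftrightarrow> enat m \<le> x \<and> \<not> enat (Suc m) \<le> x"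
  by (cases x) auto

lemma inf_eq_iff: "x = \<infinity> \<longleftrightarrow> (\<forall>j. enat j \<le> x)"
  by (cases x) (auto, metis Suc_n_not_le_n)

lemma le_Suc_iff_less: "(x::enat) \<le> enat i \<longleftrightarrow> x < enat (Suc i)"
  by (cases x) auto

theorem proposition2p7:
  fixes f :: "enat \<Rightarrow> enat" and n m :: nat
  assumes "time_warp f" and "n \<noteq> 0"
  shows "(star f (enat n) = enat m \<longleftrightarrow> f (enat m) < enat n \<and> enat n \<le> f (enat (Suc m)))
     \<and> (star f \<infinity> = enat m \<longleftrightarrow> f (enat m) < \<infinity> \<and> f (enat (Suc m)) = \<infinity>)
     \<and> (star f (enat n) = \<infinity> \<longleftrightarrow> f \<infinity> < enat n)
     \<and> (star f \<infinity> = \<infinity> \<longleftrightarrow> f \<infinity> < \<infinity> \<or> last_tw f = \<infinity>)"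
proof -
  note tw = assms(1)
  obtain i where n: "n = Suc i" using assms(2) by (cases n) auto
  have S: "star f (enat n) = gg f (enat n)" using star_hh[OF tw] hh_pos assms(2) by simp
  have G: "y \<le> star f (enat n) \<longleftrightarrow> f y < enat n" for y
    using S gg_iff[OF tw, of y "enat n"] pred_Suc[of i] le_Suc_iff_less[of "f y" i] n by simp
  have H: "enat j \<le> star f \<infinity> \<longleftrightarrow> f (enat j) < \<infinity>" for j
    unfolding star_hh[OF tw] by (rule key_inf[OF tw])
  have 1: "star f (enat n) = enat m \<longleftrightarrow> f (enat m) < enat n \<and> enat n \<le> f (enat (Suc m))"
    unfolding enat_eq_iff[of "star f (enat n)"] G by auto
  have 2: "star f \<infinity> = enat m \<longleftrightarrow> f (enat m) < \<infinity> \<and> f (enat (Suc m)) = \<infinity>"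
    unfolding enat_eq_iff[of "star f \<infinity>"] H by auto
  have 3: "star f (enat n) = \<infinity> \<longleftrightarrow> f \<infinity> < enat n"
    using G[of \<infinity>] by (simp add: top.extremum_unique[symmetric] del: top.extremum_unique)
  have 4: "star f \<infinity> = \<infinity> \<longleftrightarrow> f \<infinity> < \<infinity> \<or> last_tw f = \<infinity>"
  proof -
    have "star f \<infinity> = \<infinity> \<longleftrightarrow> (\<forall>j. f (enat j) < \<infinity>)"
      unfolding inf_eq_iff[of "star f \<infinity>"] H ..
    also have "\<dots> \<longleftrightarrow> f \<infinity> < \<infinity> \<or> last_tw f = \<infinity>"
    proof
      assume a: "\<forall>j. f (enat j) < \<infinity>"
      show "f \<infinity> < \<infinity> \<or> last_tw f = \<infinity>"
      proof (cases "f \<infinity> < \<infinity>")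
        case False
        then have fi: "f \<infinity> = \<infinity>" by simp
        have "last_tw f = \<infinity>"
          unfolding last_tw_def
        proof (rule Least_equality)
          show "f \<infinity> = f \<infinity>" ..
          fix y assume "f y = f \<infinity>"
          then show "\<infinity> \<le> y"
          proof (cases y)
            case (enat k)
            then have "f (enat k) < \<infinity>" using a by blast
            then show ?thesis using \<open>f y = f \<infinity>\<close> fi enat by simp
          qed simp
        qed
        then show ?thesis by simp
      qed simp
    next
      assume b: "f \<infinity> < \<infinity> \<or> last_tw f = \<infinity>"
      show "\<forall>j. f (enat j) < \<infinity>"
      proof
        fix j
        show "f (enat j) < \<infinity>"
        proof (cases "f \<infinity> < \<infinity>")
          case True
          have "f (enat j) \<le> f \<infinity>" using monoD[OF tw_mono[OF tw]] by simp
          then show ?thesis using True by (rule le_less_trans)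
        next
          case False
          then have fi: "f \<infinity> = \<infinity>" and l: "last_tw f = \<infinity>" using b by auto
          show ?thesis
          proof (rule ccontr)
            assume "\<not> f (enat j) < \<infinity>"
            then have "f (enat j) = f \<infinity>" using fi by simp
            then have "last_tw f \<le> enat j" unfolding last_tw_def by (rule Least_le)
            then show False using l by simp
          qed
        qed
      qed
    qed
    finally show ?thesis .
  qed
  show ?thesis using 1 2 3 4 by blast
qed

end
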